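(* Let $M\ge 0$. Given an infinite antichain $S_1,S_2,\dots$ in the poset $(\mathrm{RL},\le_{RL})$, where $S_i$ is a reading list of type $(d_i,n_i)$, at least one of the sequences $(n_i)_i$ and $(d_i)_i$ is bounded.
   Context: Fix an integer $M\ge0$. A reading list of type $(d,n)$ is a tuple $S=(S^1,\dots,S^n)$ of $d$-element subsets of $[Md]=\{1,\dots,Md\}$ (each $S^i$ viewed as an increasing word). $\mathrm{RL}$ denotes the set of all reading lists of all types. For $S=(S^1,\dots,S^n)$ of type $(d,n)$ and $T=(T^1,\dots,T^m)$ of type $(e,m)$, define $S\le_{RL}T$ iff there exist indices $1\le k_1<k_2<\cdots<k_n\le m$ and maps $f_i:S^i\to T^{k_i}$ ($i=1,\dots,n$), each strictly increasing, such that $f_i(x)=f_j(x)$ for all $i,j$ and all $x\in S^i\cap S^j$. An antichain is a sequence of pairwise incomparable elements. *)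

theory Defs
  imports Main
begin

text \<open>A reading list is represented together with its type: a pair (d, Ss) where
  Ss is the list (S^1,...,S^n) of d-element subsets of [M d] = {1..M*d}; n = length Ss.\<close>

type_synonym reading_list = "nat \<times> nat set list"

definition is_reading_list :: "nat \<Rightarrow> reading_list \<Rightarrow> bool" where
  "is_reading_list M S \<longleftrightarrow>
     (\<forall>A \<in> set (snd S). A \<subseteq> {1..M * fst S} \<and> card A = fst S)"

definition rl_d :: "reading_list \<Rightarrow> nat" where
  "rl_d S = fst S"

definition rl_n :: "reading_list \<Rightarrow> nat" where
  "rl_n S = length (snd S)"

definition rl_le :: "reading_list \<Rightarrow> reading_list \<Rightarrow> bool" where
  "rl_le S T \<longleftrightarrow>
     (let Ss = snd S; Ts = snd T; n = length Ss; m = length Ts in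
      \<exists>k :: nat \<Rightarrow> nat. \<exists>f :: nat \<Rightarrow> nat \<Rightarrow> nat.
        strict_mono_on {..<n} k \<and> (\<forall>i<n. k i < m) \<and>
        (\<forall>i<n. strict_mono_on (Ss ! i) (f i) \<and> f i ` (Ss ! i) \<subseteq> Ts ! (k i)) \<and>
        (\<forall>i<n. \<forall>j<n. \<forall>x \<in> Ss ! i \<inter> Ss ! j. f i x = f j x))"

definition rl_antichain :: "(nat \<Rightarrow> reading_list) \<Rightarrow> bool" where
  "rl_antichain A \<longleftrightarrow> (\<forall>i j. i \<noteq> j \<longrightarrow> \<not> rl_le (A i) (A j) \<and> \<not> rl_le (A j) (A i))"

end

theory Submission
  imports Defs "HOL-Library.Ramsey" "HOL-Library.Sublist" "HOL-Library.FuncSet"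
begin


definition af :: "('a \<Rightarrow> 'a \<Rightarrow> bool) \<Rightarrow> 'a set \<Rightarrow> bool" where
  "af P A \<longleftrightarrow> (\<forall>f. (\<forall>i::nat. f i \<in> A) \<longrightarrow> (\<exists>i j. i < j \<and> P (f i) (f j)))"

lemma af_inf:
  fixes f :: "nat \<Rightarrow> 'a"
  assumes "af P A" "infinite Z" "\<forall>i\<in>Z. f i \<in> A"
  shows "\<exists>i\<in>Z. \<exists>j\<in>Z. i < j \<and> P (f i) (f j)"
proof -
  have sm: "strict_mono (enumerate Z)" using assms(2) by (rule strict_mono_enumerate)
  have inZ: "\<And>n. enumerate Z n \<in> Z" using assms(2) by (rule enumerate_in_set)
  have "\<forall>i. f (enumerate Z i) \<in> A" using inZ assms(3) by blast
  then have "\<exists>i j. i < j \<and> P (f (enumerate Z i)) (f (enumerate Z j))"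
    using assms(1) unfolding af_def by (elim allE[of _ "\<lambda>i. f (enumerate Z i)"]) simp
  then obtain i j where ij: "i < j" "P (f (enumerate Z i)) (f (enumerate Z j))" by blast
  have "enumerate Z i < enumerate Z j" using sm ij(1) by (simp add: strict_mono_less)
  then show ?thesis using ij(2) inZ by blast
qed

lemma af_empty: "af P {}" unfolding af_def by auto

lemma af_union:
  assumes "af P A" "af P B" shows "af P (A \<union> B)"
  unfolding af_def
proof (intro allI impI)
  fix f :: "nat \<Rightarrow> 'a" assume f: "\<forall>i. f i \<in> A \<union> B"
  show "\<exists>i j. i < j \<and> P (f i) (f j)"
  proof (cases "finite {i. f i \<in> A}")
    case False
    then show ?thesis using af_inf[OF assms(1) False, of f] by auto
  next
    case True
    hence "infinite (UNIV - {i. f i \<in> A})" by (simp add: Diff_infinite_finite)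
    moreover have "\<forall>i\<in>UNIV - {i. f i \<in> A}. f i \<in> B" using f by auto
    ultimately show ?thesis using af_inf[OF assms(2)] by blast
  qed
qed

lemma af_chain:
  fixes f :: "nat \<Rightarrow> 'a"
  assumes "af P A" "infinite Z" "\<forall>i\<in>Z. f i \<in> A"
  shows "\<exists>Y\<subseteq>Z. infinite Y \<and> (\<forall>i\<in>Y. \<forall>j\<in>Y. i < j \<longrightarrow> P (f i) (f j))"
proof -
  define g where "g X = (if P (f (Min X)) (f (Max X)) then 0 else (1::nat))" for X :: "nat set"
  have "\<forall>x\<in>Z. \<forall>y\<in>Z. x \<noteq> y \<longrightarrow> g {x, y} < 2" unfolding g_def by auto
  from Ramsey2[OF assms(2) this] obtain Y t where Y: "Y \<subseteq> Z" "infinite Y" "t < 2"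
    "\<forall>x\<in>Y. \<forall>y\<in>Y. x \<noteq> y \<longrightarrow> g {x, y} = t" by blast
  have gxy: "g {x, y} = (if P (f x) (f y) then 0 else 1)" if "x < y" for x y
    using that unfolding g_def by (simp add: min_def max_def)
  have "t = 0"
  proof (rule ccontr)
    assume "t \<noteq> 0"
    from af_inf[OF assms(1) Y(2)] Y(1) assms(3) obtain i j where
      "i \<in> Y" "j \<in> Y" "i < j" "P (f i) (f j)" by blast
    with Y(4) gxy[of i j] \<open>t \<noteq> 0\<close> show False by auto
  qed
  hence "\<forall>i\<in>Y. \<forall>j\<in>Y. i < j \<longrightarrow> P (f i) (f j)"
    using Y(4) gxy by (metis less_not_refl one_neq_zero)
  with Y show ?thesis by blast
qed

lemma af_prod_image:
  assumes "af P A" "af Q B"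
    and "\<And>a a' b b'. a \<in> A \<Longrightarrow> a' \<in> A \<Longrightarrow> b \<in> B \<Longrightarrow> b' \<in> B \<Longrightarrow>
           P a a' \<Longrightarrow> Q b b' \<Longrightarrow> R (h a b) (h a' b')"
  shows "af R {h a b | a b. a \<in> A \<and> b \<in> B}"
  unfolding af_def
proof (intro allI impI)
  fix f :: "nat \<Rightarrow> 'c" assume f: "\<forall>i. f i \<in> {h a b | a b. a \<in> A \<and> b \<in> B}"
  then have "\<forall>i. \<exists>p. fst p \<in> A \<and> snd p \<in> B \<and> f i = h (fst p) (snd p)" by fastforce
  then obtain p where p: "\<And>i. fst (p i) \<in> A \<and> snd (p i) \<in> B \<and> f i = h (fst (p i)) (snd (p i))"
    by metis
  obtain Y where Y: "infinite Y" "\<forall>i\<in>Y. \<forall>j\<in>Y. i < j \<longrightarrow> P (fst (p i)) (fst (p j))"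
    using af_chain[OF assms(1), of UNIV "\<lambda>i. fst (p i)"] p by auto
  obtain i j where "i \<in> Y" "j \<in> Y" "i < j" "Q (snd (p i)) (snd (p j))"
    using af_inf[OF assms(2) Y(1), of "\<lambda>i. snd (p i)"] p by auto
  then show "\<exists>i j. i < j \<and> R (f i) (f j)" using Y(2) p assms(3) by metis
qed

lemma af_subset: "af P A \<Longrightarrow> B \<subseteq> A \<Longrightarrow> af P B"
  unfolding af_def by blast

definition words :: "'a set \<Rightarrow> 'a list set" where "words S = {xs. set xs \<subseteq> S}"

lemma higman_step:
  assumes IH: "\<And>T. T \<subset> S \<Longrightarrow> af subseq (words T)"
  shows "set x \<subseteq> S \<Longrightarrow> af subseq {w \<in> words S. \<not> subseq x w}"
proof (induction x)
  case Nil
  then show ?case by (simp add: af_empty)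
next
  case (Cons a x)
  then have aS: "a \<in> S" and IHx: "af subseq {w \<in> words S. \<not> subseq x w}" by auto
  have sub: "{w \<in> words S. \<not> subseq (a # x) w} \<subseteq> words (S - {a}) \<union>
     {v @ a # u | v u. v \<in> words (S - {a}) \<and> u \<in> {w \<in> words S. \<not> subseq x w}}"
  proof
    fix w assume w: "w \<in> {w \<in> words S. \<not> subseq (a # x) w}"
    show "w \<in> words (S - {a}) \<union>
     {v @ a # u | v u. v \<in> words (S - {a}) \<and> u \<in> {w \<in> words S. \<not> subseq x w}}"
    proof (cases "a \<in> set w")
      case False then show ?thesis using w by (auto simp: words_def)
    next
      case True
      then obtain v u where vu: "w = v @ a # u" "a \<notin> set v" by (metis split_list_first)
      have "\<not> subseq x u" using w vu by auto
      then show ?thesis using w vu by (auto simp: words_def)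
    qed
  qed
  have "af subseq (words (S - {a}))" using IH aS by blast
  moreover have "af subseq {v @ a # u | v u. v \<in> words (S - {a}) \<and> u \<in> {w \<in> words S. \<not> subseq x w}}"
    by (rule af_prod_image[OF \<open>af subseq (words (S - {a}))\<close> IHx])
       (simp add: list_emb_append_mono)
  ultimately have "af subseq (words (S - {a}) \<union>
     {v @ a # u | v u. v \<in> words (S - {a}) \<and> u \<in> {w \<in> words S. \<not> subseq x w}})"
    by (rule af_union)
  then show ?case using sub by (rule af_subset)
qed

lemma higman: "finite S \<Longrightarrow> af subseq (words S)"
proof (induction S rule: finite_psubset_induct)
  case (psubset S)
  show ?case unfolding af_def
  proof (intro allI impI)
    fix f :: "nat \<Rightarrow> 'a list" assume f: "\<forall>i. f i \<in> words S"
    show "\<exists>i j. i < j \<and> subseq (f i) (f j)"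
    proof (rule ccontr)
      assume no: "\<not> ?thesis"
      have "af subseq {w \<in> words S. \<not> subseq (f 0) w}"
        using higman_step[OF psubset.IH] f by (auto simp: words_def)
      moreover have "infinite {1::nat..}" by (simp add: infinite_Ici)
      moreover have "\<forall>i\<in>{1..}. f i \<in> {w \<in> words S. \<not> subseq (f 0) w}" using f no by auto
      ultimately obtain i j where "i < j" "subseq (f i) (f j)" using af_inf by blast
      with no show False by blast
    qed
  qed
qed



lemma subseq_idx:
  "subseq xs ys \<Longrightarrow> \<exists>k. strict_mono_on {..<length xs} k \<and>
     (\<forall>i<length xs. k i < length ys \<and> xs ! i = ys ! (k i))"
proof (induction rule: list_emb.induct)
  case (list_emb_Nil ys)
  show ?case by (rule exI[of _ id]) (simp add: strict_mono_on_def)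
next
  case (list_emb_Cons xs ys y)
  then obtain k where k: "strict_mono_on {..<length xs} k"
    "\<forall>i<length xs. k i < length ys \<and> xs ! i = ys ! (k i)" by blast
  show ?case
    by (rule exI[of _ "\<lambda>i. Suc (k i)"]) (use k in \<open>auto simp: strict_mono_on_def\<close>)
next
  case (list_emb_Cons2 x y xs ys)
  then obtain k where k: "strict_mono_on {..<length xs} k"
    "\<forall>i<length xs. k i < length ys \<and> xs ! i = ys ! (k i)" by blast
  have xy: "x = y" using list_emb_Cons2 by simp
  define k' where "k' i = (case i of 0 \<Rightarrow> 0 | Suc j \<Rightarrow> Suc (k j))" for i
  have "strict_mono_on {..<length (x # xs)} k'"
    unfolding strict_mono_on_def
  proof (intro allI impI)
    fix r s assume rs: "r \<in> {..<length (x # xs)} \<and> s \<in> {..<length (x # xs)} \<and> r < s"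
    then obtain s' where s': "s = Suc s'" by (cases s) auto
    show "k' r < k' s"
    proof (cases r)
      case 0 then show ?thesis using s' by (simp add: k'_def)
    next
      case (Suc r')
      then have "k r' < k s'" using k(1) rs s' unfolding strict_mono_on_def by auto
      then show ?thesis using Suc s' by (simp add: k'_def)
    qed
  qed
  moreover have "\<forall>i<length (x # xs). k' i < length (y # ys) \<and> (x # xs) ! i = (y # ys) ! (k' i)"
  proof (intro allI impI)
    fix i assume "i < length (x # xs)"
    then show "k' i < length (y # ys) \<and> (x # xs) ! i = (y # ys) ! (k' i)"
      using k(2) xy by (cases i) (auto simp: k'_def)
  qed
  ultimately show ?case by blast
qed

lemma rl_le_subseq:
  assumes "subseq (snd S) (snd T)" shows "rl_le S T"
proof -
  obtain k where k: "strict_mono_on {..<length (snd S)} k"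
    "\<forall>i<length (snd S). k i < length (snd T) \<and> snd S ! i = snd T ! (k i)"
    using subseq_idx[OF assms] by blast
  show ?thesis unfolding rl_le_def Let_def
    apply (rule exI[of _ k], rule exI[of _ "\<lambda>i x. x"])
    using k by (auto simp: strict_mono_on_def)
qed

lemma rl_le_nil: "snd S = [] \<Longrightarrow> rl_le S T"
  unfolding rl_le_def Let_def by (auto simp: strict_mono_on_def)



lemma key:
  assumes M1: "M \<ge> 1" and S: "is_reading_list M S" and T: "is_reading_list M T"
    and m: "length (snd T) \<ge> 2 * M * length (snd S)"
    and e: "fst T \<ge> 2 * (M * fst S + 1) * 2 ^ (2 * M * length (snd S))"
  shows "rl_le S T"
proof (cases "snd S = []")
  case True then show ?thesis by (rule rl_le_nil)
next
  case False
  define n where "n = length (snd S)"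
  define d where "d = fst S"
  define m0 where "m0 = 2 * M * n"
  define E where "E = fst T"
  define Ts where "Ts = snd T"
  define Ss where "Ss = snd S"
  define C where "C = {1..M * E}"
  define R where "R y = {k \<in> {..<m0}. y \<in> Ts ! k}" for y
  define H where "H = {y \<in> C. n \<le> card (R y)}"
  define c where "c = M * d + 1"
  have n1: "n \<ge> 1" using False by (cases "snd S") (auto simp: n_def)
  have m0T: "m0 \<le> length Ts" using m by (simp add: m0_def n_def Ts_def)
  have TsC: "Ts ! k \<subseteq> C" "card (Ts ! k) = E" if "k < m0" for k
  proof -
    have "Ts ! k \<in> set (snd T)" using that m0T by (simp add: Ts_def)
    then show "Ts ! k \<subseteq> C" "card (Ts ! k) = E"
      using T by (auto simp: is_reading_list_def C_def E_def)
  qed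
  have finC: "finite C" by (simp add: C_def)
  have cardC: "card C = M * E" by (simp add: C_def)
  have count: "(\<Sum>y\<in>C. card (R y)) = m0 * E"
  proof -
    have "(\<Sum>y\<in>C. card {k \<in> {..<m0}. y \<in> Ts ! k}) = (\<Sum>k\<in>{..<m0}. E)"
    proof (rule sum_multicount_gen)
      show "\<forall>j\<in>{..<m0}. card {i \<in> C. i \<in> Ts ! j} = E"
      proof
        fix j assume "j \<in> {..<m0}"
        then have "{i \<in> C. i \<in> Ts ! j} = Ts ! j" "card (Ts ! j) = E" using TsC by auto
        then show "card {i \<in> C. i \<in> Ts ! j} = E" by simp
      qed
    qed (auto simp: finC)
    then show ?thesis by (simp add: R_def)
  qed
  have Rle: "card (R y) \<le> m0" for y
    unfolding R_def by (metis (no_types, lifting) card_lessThan card_mono finite_lessThan mem_Collect_eq subsetI)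
  have HC: "H \<subseteq> C" by (auto simp: H_def)
  have "(\<Sum>y\<in>C. card (R y)) \<le> (\<Sum>y\<in>C. (if y \<in> H then m0 else n))"
    by (rule sum_mono) (auto simp: H_def Rle)
  also have "\<dots> = (\<Sum>y\<in>H. m0) + (\<Sum>y\<in>C - H. n)"
    using finC HC by (simp add: sum.If_cases Int_absorb1 Diff_eq)
  also have "\<dots> \<le> card H * m0 + M * E * n"
  proof -
    have "card (C - H) \<le> card C" using finC by (simp add: card_mono)
    then have "card (C - H) * n \<le> M * E * n" using cardC by simp
    then show ?thesis by simp
  qed
  finally have ineq: "m0 * E \<le> card H * m0 + M * E * n" using count by simp
  define q where "q = M * n"
  have q0: "q > 0" using M1 n1 by (simp add: q_def)
  have "2 * q * E \<le> card H * 2 * q + E * q" using ineq by (simp add: m0_def q_def algebra_simps)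
  then have "q * E \<le> q * (2 * card H)" by (simp add: algebra_simps)
  then have EH: "E \<le> 2 * card H" using q0 by simp
  have "2 * (c * 2 ^ m0) \<le> E" using e by (simp add: c_def d_def m0_def n_def E_def algebra_simps)
  then have Hbig: "c * 2 ^ m0 \<le> card H" using EH by linarith
  have finH: "finite H" using finC HC by (rule finite_subset[rotated])
  obtain P where P: "P \<in> Pow {..<m0}" "card (R -` {P} \<inter> H) * card (Pow {..<m0}) \<ge> card H"
  proof -
    have "R \<in> H \<rightarrow> Pow {..<m0}" by (auto simp: R_def)
    moreover have "Pow {..<m0} \<noteq> {}" by auto
    ultimately have "\<exists>y\<in>Pow {..<m0}. card H \<le> card (R -` {y} \<inter> H) * card (Pow {..<m0})"
      using pigeonhole_card[of R H "Pow {..<m0}"] finH by auto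
    then show ?thesis using that by blast
  qed
  define F where "F = R -` {P} \<inter> H"
  have "card H \<le> card F * 2 ^ m0" using P(2) by (simp add: F_def card_Pow)
  then have "c * 2 ^ m0 \<le> card F * 2 ^ m0" using Hbig by linarith
  then have cF: "card F \<ge> c" by simp
  then have "F \<noteq> {}" by (auto simp: c_def)
  then obtain y0 where y0: "y0 \<in> F" by blast
  then have Py0: "R y0 = P" "n \<le> card P" by (auto simp: F_def H_def)
  have finF: "finite F" using finH by (simp add: F_def)
  have FT: "y \<in> Ts ! k" if "y \<in> F" "k \<in> P" for y k
    using that by (auto simp: F_def R_def)
  have Psub: "P \<subseteq> {..<m0}" using P by simp
  have finP: "finite P" using Psub finite_subset by blast
  define ks where "ks = sorted_list_of_set P"
  define fs where "fs = sorted_list_of_set F"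
  have ks: "sorted_wrt (<) ks" "length ks = card P" "set ks = P"
    using finP by (auto simp: ks_def strict_sorted_list_of_set)
  have fs: "sorted_wrt (<) fs" "length fs = card F" "set fs = F"
    using finF by (auto simp: fs_def strict_sorted_list_of_set)
  show ?thesis
    unfolding rl_le_def Let_def
  proof (intro exI conjI)
    show "strict_mono_on {..<length (snd S)} (\<lambda>i. ks ! i)"
      unfolding strict_mono_on_def
    proof (intro allI impI)
      fix r s assume rs: "r \<in> {..<length (snd S)} \<and> s \<in> {..<length (snd S)} \<and> r < s"
      then have "r < s" "s < length ks" using ks(2) Py0(2) by (auto simp: n_def)
      then show "ks ! r < ks ! s" by (rule sorted_wrt_nth_less[OF ks(1)])
    qed
    show "\<forall>i<length (snd S). ks ! i < length (snd T)"
    proof (intro allI impI)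
      fix i assume "i < length (snd S)"
      then have "i < length ks" using ks(2) Py0(2) unfolding n_def by linarith
      then have "ks ! i \<in> set ks" by (rule nth_mem)
      then have "ks ! i \<in> P" using ks(3) by simp
      then have "ks ! i < m0" using Psub by blast
      then show "ks ! i < length (snd T)" using m0T unfolding Ts_def by linarith
    qed
    show "\<forall>i<length (snd S). strict_mono_on (snd S ! i) (\<lambda>x. fs ! (x - 1)) \<and>
        (\<lambda>x. fs ! (x - 1)) ` (snd S ! i) \<subseteq> snd T ! (ks ! i)"
    proof (intro allI impI conjI)
      fix i assume i: "i < length (snd S)"
      have Si: "snd S ! i \<subseteq> {1..M * d}"
        using S i by (auto simp: is_reading_list_def d_def)
      have lenfs: "M * d < length fs" using fs cF by (simp add: c_def)
      show "strict_mono_on (snd S ! i) (\<lambda>x. fs ! (x - 1))"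
        unfolding strict_mono_on_def
      proof (intro allI impI)
        fix r s assume rs: "r \<in> snd S ! i \<and> s \<in> snd S ! i \<and> r < s"
        then have "r \<ge> 1" "s \<le> M * d" using Si by auto
        then have "r - 1 < s - 1" "s - 1 < length fs" using rs lenfs by auto
        then show "fs ! (r - 1) < fs ! (s - 1)"
          by (rule sorted_wrt_nth_less[OF fs(1)])
      qed
      have "i < length ks" using i ks(2) Py0(2) unfolding n_def by linarith
      then have "ks ! i \<in> set ks" by (rule nth_mem)
      then have kP: "ks ! i \<in> P" using ks(3) by simp
      show "(\<lambda>x. fs ! (x - 1)) ` (snd S ! i) \<subseteq> snd T ! (ks ! i)"
      proof
        fix z assume "z \<in> (\<lambda>x. fs ! (x - 1)) ` (snd S ! i)"
        then obtain x where x: "x \<in> snd S ! i" "z = fs ! (x - 1)" by blast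
        then have "x \<le> M * d" using Si by auto
        then have "x - 1 < length fs" using lenfs by linarith
        then have "z \<in> F" using x fs by (auto simp: set_conv_nth)
        then show "z \<in> snd T ! (ks ! i)" using FT kP by (simp add: Ts_def)
      qed
    qed
    show "\<forall>i<length (snd S). \<forall>j<length (snd S). \<forall>x\<in>snd S ! i \<inter> snd S ! j.
        fs ! (x - 1) = fs ! (x - 1)" by blast
  qed
qed



theorem mainTheorem4:
  fixes M :: nat and A :: "nat \<Rightarrow> reading_list"
  assumes "\<forall>i. is_reading_list M (A i)"
    and "rl_antichain A"
  shows "bdd_above (range (\<lambda>i. rl_n (A i))) \<or> bdd_above (range (\<lambda>i. rl_d (A i)))"
proof (rule ccontr)
  assume nb: "\<not> ?thesis"
  have rl: "\<And>i. is_reading_list M (A i)" using assms(1) by blast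
  have ac: "\<And>i j. i \<noteq> j \<Longrightarrow> \<not> rl_le (A i) (A j)"
    using assms(2) unfolding rl_antichain_def by blast
  have ne: "snd (A i) \<noteq> []" for i
  proof
    assume "snd (A i) = []"
    then have "rl_le (A i) (A (Suc i))" by (rule rl_le_nil)
    with ac[of i "Suc i"] show False by simp
  qed
  have M1: "M \<ge> 1"
  proof (rule ccontr)
    assume "\<not> M \<ge> 1"
    then have M0: "M = 0" by simp
    have "fst (A i) = 0" for i
    proof -
      have "hd (snd (A i)) \<in> set (snd (A i))" using ne[of i] by simp
      then have "hd (snd (A i)) \<subseteq> {1..0}" "card (hd (snd (A i))) = fst (A i)"
        using rl[of i] M0 unfolding is_reading_list_def by auto
      then show ?thesis by simp
    qed
    then have "bdd_above (range (\<lambda>i. rl_d (A i)))" by (simp add: rl_d_def)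
    with nb show False by simp
  qed
  define S where "S = A 0"
  define m0 where "m0 = 2 * M * length (snd S)"
  define e0 where "e0 = 2 * (M * fst S + 1) * 2 ^ m0"
  define J where "J = {j. j \<noteq> 0 \<and> m0 \<le> length (snd (A j))}"
  have infJ: "infinite J"
  proof
    assume finJ: "finite J"
    define B where "B = Max (insert 0 ((\<lambda>j. length (snd (A j))) ` J)) + m0 + length (snd (A 0))"
    have "length (snd (A i)) \<le> B" for i
    proof (cases "i \<in> J")
      case True
      then have "length (snd (A i)) \<le> Max (insert 0 ((\<lambda>j. length (snd (A j))) ` J))"
        using finJ by (intro Max_ge) auto
      then show ?thesis by (simp add: B_def)
    next
      case False
      then have "i = 0 \<or> length (snd (A i)) < m0" by (auto simp: J_def)
      then show ?thesis by (auto simp: B_def)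
    qed
    then have "bdd_above (range (\<lambda>i. rl_n (A i)))"
      by (intro bdd_aboveI[of _ B]) (auto simp: rl_n_def)
    with nb show False by simp
  qed
  have dJ: "fst (A j) < e0" if "j \<in> J" for j
  proof (rule ccontr)
    assume "\<not> fst (A j) < e0"
    then have "rl_le S (A j)"
      using key[OF M1 rl[of 0] rl[of j]] that by (simp add: S_def m0_def e0_def J_def)
    with ac[of 0 j] that show False by (simp add: S_def J_def)
  qed
  have "finite ((\<lambda>j. fst (A j)) ` J)"
    by (rule finite_subset[of _ "{..<e0}"]) (auto simp: dJ)
  from pigeonhole_infinite[OF infJ this] obtain a0 where
    a0: "a0 \<in> J" "infinite {a \<in> J. fst (A a) = fst (A a0)}" by blast
  define Z where "Z = {a \<in> J. fst (A a) = fst (A a0)}"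
  define D where "D = fst (A a0)"
  have "af subseq (words (Pow {1..M * D}))" by (rule higman) simp
  moreover have "infinite Z" using a0 by (simp add: Z_def)
  moreover have "\<forall>j\<in>Z. snd (A j) \<in> words (Pow {1..M * D})"
  proof
    fix j assume "j \<in> Z"
    then have "fst (A j) = D" by (simp add: Z_def D_def)
    then show "snd (A j) \<in> words (Pow {1..M * D})"
      using rl[of j] by (auto simp: words_def is_reading_list_def)
  qed
  ultimately obtain i j where "i \<in> Z" "j \<in> Z" "i < j" "subseq (snd (A i)) (snd (A j))"
    using af_inf[of subseq "words (Pow {1..M * D})" Z "\<lambda>j. snd (A j)"] by blast
  then have "rl_le (A i) (A j)" by (simp add: rl_le_subseq)
  with ac[of i j] \<open>i < j\<close> show False by simp
qed

end
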